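(* Let $H_1,H_2$ be complex Hilbert spaces. The set $\{A\in\mathcal B(H_1,H_2): A \text{ is minimum attaining and bounded below}\}$ is dense, in the operator norm, in $\{A\in\mathcal B(H_1,H_2): A\text{ is bounded below}\}$.
   Context: Hilbert spaces are complex and infinite dimensional. For $A\in\mathcal B(H_1,H_2)$, $m(A)=\inf\{\|Ax\|:\|x\|=1\}$; $A$ is minimum attaining if there exists $x_0$ with $\|x_0\|=1$ and $\|Ax_0\|=m(A)$; $A$ is bounded below if there is $c>0$ with $\|Ax\|\geq c\|x\|$ for all $x$. *)

theory Defs
  imports "HOL-Analysis.Analysis"
begin

text \<open>The distribution has no class of complex inner product
spaces, so we model a complex Hilbert space as a real Hilbert space (real inner
product = real part of the complex inner product, complete) equipped with a complex
scalar multiplication extending the real one and compatible with the norm.\<close>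

class complex_hilbert = real_inner + complete_space +
  fixes cscale :: "complex \<Rightarrow> 'a \<Rightarrow> 'a"
  assumes cscale_add_right: "cscale c (x + y) = cscale c x + cscale c y"
    and cscale_add_left: "cscale (c + d) x = cscale c x + cscale d x"
    and cscale_cscale: "cscale c (cscale d x) = cscale (c * d) x"
    and cscale_of_real: "cscale (complex_of_real r) x = scaleR r x"
    and norm_cscale: "norm (cscale c x) = cmod c * norm x"

instantiation complex :: complex_hilbert
begin
definition cscale_complex :: "complex \<Rightarrow> complex \<Rightarrow> complex" where
  "cscale_complex c x = c * x"
instance
  by standard (auto simp: cscale_complex_def algebra_simps norm_mult scaleR_conv_of_real)
end

definition cspan :: "'a::complex_hilbert set \<Rightarrow> 'a set" where
  "cspan S = {\<Sum>x\<in>T. cscale (c x) x | T c. finite T \<and> T \<subseteq> S}"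

definition infinite_dimensional :: "'a::complex_hilbert itself \<Rightarrow> bool" where
  "infinite_dimensional _ \<longleftrightarrow> \<not> (\<exists>S::'a set. finite S \<and> cspan S = UNIV)"

text \<open>\<B>(H1,H2): bounded operators that are complex linear. Elements of the
blinfun type are bounded real-linear maps; the operator norm is the blinfun norm.\<close>
definition clinear_op :: "('a::complex_hilbert \<Rightarrow>\<^sub>L 'b::complex_hilbert) \<Rightarrow> bool" where
  "clinear_op A \<longleftrightarrow> (\<forall>c x. blinfun_apply A (cscale c x) = cscale c (blinfun_apply A x))"

definition min_modulus :: "('a::real_normed_vector \<Rightarrow>\<^sub>L 'b::real_normed_vector) \<Rightarrow> real" where
  "min_modulus A = Inf {norm (blinfun_apply A x) | x. norm x = 1}"

definition minimum_attaining :: "('a::real_normed_vector \<Rightarrow>\<^sub>L 'b::real_normed_vector) \<Rightarrow> bool" where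
  "minimum_attaining A \<longleftrightarrow> (\<exists>x0. norm x0 = 1 \<and> norm (blinfun_apply A x0) = min_modulus A)"

definition bounded_below :: "('a::real_normed_vector \<Rightarrow>\<^sub>L 'b::real_normed_vector) \<Rightarrow> bool" where
  "bounded_below A \<longleftrightarrow> (\<exists>c>0. \<forall>x. norm (blinfun_apply A x) \<ge> c * norm x)"

end

theory Submission
  imports Defs
begin


lemma cscale_zero[simp]: "cscale c 0 = (0::'a::complex_hilbert)"
  using cscale_add_right[of c "0::'a" 0] by simp

lemma cscale_minus: "cscale c (- x) = - cscale c (x::'a::complex_hilbert)"
  using cscale_add_right[of c x "-x"] by (simp add: eq_neg_iff_add_eq_0 add.commute)

lemma cscale_diff: "cscale c (x - y) = cscale c x - cscale c (y::'a::complex_hilbert)"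
  by (metis cscale_add_right diff_add_cancel eq_diff_eq)

lemma cscale_scaleR: "cscale c (r *\<^sub>R x) = r *\<^sub>R cscale c (x::'a::complex_hilbert)"
proof -
  have "cscale c (r *\<^sub>R x) = cscale c (cscale (complex_of_real r) x)" by (simp add: cscale_of_real)
  also have "\<dots> = cscale (complex_of_real r) (cscale c x)" by (simp add: cscale_cscale mult.commute)
  finally show ?thesis by (simp add: cscale_of_real)
qed

lemma ii_ii: "cscale \<i> (cscale \<i> x) = - (x::'a::complex_hilbert)"
proof -
  have "cscale \<i> (cscale \<i> x) = cscale (complex_of_real (-1)) x" by (simp add: cscale_cscale)
  then show ?thesis using cscale_of_real[of "-1" x] by simp
qed

lemma cscale_decomp: "cscale c x = Re c *\<^sub>R x + Im c *\<^sub>R cscale \<i> (x::'a::complex_hilbert)"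
proof -
  have "cscale c x = cscale (complex_of_real (Re c) + \<i> * complex_of_real (Im c)) x"
    using complex_eq[of c] by simp
  also have "\<dots> = Re c *\<^sub>R x + Im c *\<^sub>R cscale \<i> x"
    by (simp add: cscale_add_left cscale_cscale[symmetric] cscale_of_real cscale_scaleR)
  finally show ?thesis .
qed

lemma norm_ii: "norm (cscale \<i> x) = norm (x::'a::complex_hilbert)"
  by (simp add: norm_cscale)

lemma inner_ii: "inner (cscale \<i> x) (cscale \<i> y) = inner x (y::'a::complex_hilbert)"
  by (simp add: dot_norm[of "cscale \<i> x"] dot_norm[of x] cscale_add_right[symmetric] norm_ii)

lemma inner_ii_left: "inner (cscale \<i> x) y = - inner x (cscale \<i> (y::'a::complex_hilbert))"
proof -
  have "inner (cscale \<i> x) y = inner (cscale \<i> (cscale \<i> x)) (cscale \<i> y)" by (simp add: inner_ii)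
  then show ?thesis by (simp add: ii_ii)
qed

lemma inner_ii_self: "inner x (cscale \<i> (x::'a::complex_hilbert)) = 0"
  using inner_ii_left[of x x] by (simp add: inner_commute)

lemma clinear_opI:
  assumes "\<And>x. blinfun_apply A (cscale \<i> x) = cscale \<i> (blinfun_apply A x)"
  shows "clinear_op (A :: 'a::complex_hilbert \<Rightarrow>\<^sub>L 'b::complex_hilbert)"
  unfolding clinear_op_def
proof (intro allI)
  fix c x
  have "blinfun_apply A (cscale c x) = blinfun_apply A (Re c *\<^sub>R x + Im c *\<^sub>R cscale \<i> x)"
    by (subst cscale_decomp) (rule refl)
  also have "\<dots> = Re c *\<^sub>R blinfun_apply A x + Im c *\<^sub>R cscale \<i> (blinfun_apply A x)"
    by (simp add: blinfun.add_right blinfun.scaleR_right assms)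
  also have "\<dots> = cscale c (blinfun_apply A x)" by (rule cscale_decomp[symmetric])
  finally show "blinfun_apply A (cscale c x) = cscale c (blinfun_apply A x)" .
qed

lemma clinear_opD: "clinear_op A \<Longrightarrow> blinfun_apply A (cscale \<i> x) = cscale \<i> (blinfun_apply A x)"
  unfolding clinear_op_def by blast



lemma proj_exists:
  fixes S :: "'a::{real_inner,complete_space} set" and u :: 'a
  assumes S0: "0 \<in> S" and Sadd: "\<And>x y. x\<in>S \<Longrightarrow> y\<in>S \<Longrightarrow> x+y \<in> S"
    and Sscale: "\<And>x r. x\<in>S \<Longrightarrow> r *\<^sub>R x \<in> S"
  shows "\<exists>p. (\<forall>n\<in>S. inner (u - p) n = 0) \<and> inner (u - p) p = 0 \<and>
             (\<forall>c. (\<forall>s\<in>S. c \<le> norm (u - s)) \<longrightarrow> c \<le> norm (u - p))"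
proof -
  define D where "D = {norm (u - s) | s. s \<in> S}"
  define d where "d = Inf D"
  have Dne: "D \<noteq> {}" using S0 by (auto simp: D_def)
  have Dbdd: "bdd_below D" by (auto simp: D_def intro!: bdd_belowI[of _ 0])
  have dle: "d \<le> norm (u - s)" if "s \<in> S" for s
    unfolding d_def by (rule cInf_lower) (use Dbdd that in \<open>auto simp: D_def\<close>)
  have d0: "0 \<le> d" unfolding d_def using Dne by (auto intro!: cInf_greatest simp: D_def)
  have "\<exists>s. s \<in> S \<and> norm (u - s)^2 < d^2 + 1/Suc k" for k
  proof -
    have "sqrt (d^2) < sqrt (d^2 + 1/Suc k)" by (rule real_sqrt_less_mono) simp
    then have "Inf D < sqrt (d^2 + 1/Suc k)" using d0 by (simp add: d_def)
    then obtain t where "t \<in> D" "t < sqrt (d^2 + 1/Suc k)" using cInf_lessD[OF Dne] by blast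
    then obtain s where s: "s \<in> S" "norm (u - s) < sqrt (d^2 + 1/Suc k)" by (auto simp: D_def)
    then have "norm (u - s)^2 < (sqrt (d^2 + 1/Suc k))^2"
      by (intro power_strict_mono) auto
    also have "\<dots> = d^2 + 1/Suc k" by simp
    finally show ?thesis using s by blast
  qed
  then obtain s where sS: "\<And>k. s k \<in> S" and sn: "\<And>k. norm (u - s k)^2 < d^2 + 1/Suc k" by metis
  have para: "norm (s m - s n)^2 \<le> 2/Suc m + 2/Suc n" for m n
  proof -
    define a where "a = u - s m"
    define b where "b = u - s n"
    define mid where "mid = (1/2) *\<^sub>R (s m + s n)"
    have mid: "mid \<in> S" using Sadd Sscale sS by (auto simp: mid_def)
    have ab: "a + b = 2 *\<^sub>R (u - mid)" by (simp add: a_def b_def mid_def algebra_simps scaleR_2)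
    have "d \<le> norm (u - mid)" using dle mid by blast
    then have "d^2 \<le> norm (u - mid)^2" using d0 by (intro power_mono) auto
    then have h1: "4*d^2 \<le> norm (a + b)^2" by (simp add: ab power_mult_distrib)
    have pg: "norm (a - b)^2 + norm (a + b)^2 = 2*norm a^2 + 2*norm b^2"
      by (simp add: power2_norm_eq_inner inner_add inner_diff inner_commute algebra_simps)
    have "a - b = s n - s m" by (simp add: a_def b_def)
    then have "norm (s m - s n) = norm (a - b)" by (simp add: norm_minus_commute)
    moreover have "norm a^2 < d^2 + 1/Suc m" "norm b^2 < d^2 + 1/Suc n"
      using sn by (auto simp: a_def b_def)
    ultimately show ?thesis using pg h1 by simp
  qed
  have "Cauchy s" unfolding Cauchy_def
  proof (intro allI impI)
    fix e :: real assume e: "e > 0"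
    obtain N :: nat where N: "4 / e^2 < real N" using reals_Archimedean2 by blast
    show "\<exists>M. \<forall>m\<ge>M. \<forall>n\<ge>M. dist (s m) (s n) < e"
    proof (intro exI allI impI)
      fix m n assume mn: "N \<le> m" "N \<le> n"
      have "2/real (Suc m) \<le> 2/ real (Suc N)" "2/real (Suc n) \<le> 2/ real (Suc N)"
        using mn by (auto intro!: divide_left_mono)
      moreover have "4 / real (Suc N) < e^2"
      proof -
        have "4 / e^2 < real (Suc N)" using N by simp
        then show ?thesis using e by (simp add: field_simps)
      qed
      ultimately have "dist (s m) (s n)^2 < e^2" using para[of m n] by (simp add: dist_norm)
      then show "dist (s m) (s n) < e" using e by (meson abs_le_square_iff less_le_not_le not_le power2_less_imp_less zero_le_dist)
    qed
  qed
  then obtain p where p: "s \<longlonglongrightarrow> p" using Cauchy_convergent_iff convergent_def by blast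
  have lim1: "(\<lambda>k. norm (u - s k)^2) \<longlonglongrightarrow> norm (u - p)^2" by (intro tendsto_intros p)
  have lim2: "(\<lambda>k. d^2 + inverse (real (Suc k))) \<longlonglongrightarrow> d^2 + 0"
    by (intro tendsto_intros LIMSEQ_inverse_real_of_nat)
  have up: "norm (u - p)^2 \<le> d^2"
    using LIMSEQ_le[OF lim1 lim2] sn by (simp add: less_imp_le inverse_eq_divide)
  have orth: "inner (u - p) n = 0" if n: "n \<in> S" for n
  proof -
    have ge: "norm (u - p)^2 \<le> norm ((u - p) - t *\<^sub>R n)^2" for t
    proof -
      have lim3: "(\<lambda>k. norm (u - (s k + t *\<^sub>R n))) \<longlonglongrightarrow> norm (u - (p + t *\<^sub>R n))"
        by (intro tendsto_intros p)
      have "d \<le> norm (u - (p + t *\<^sub>R n))"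
        by (rule LIMSEQ_le_const[OF lim3]) (use dle Sadd Sscale sS n in blast)
      then have "d^2 \<le> norm (u - (p + t *\<^sub>R n))^2" using d0 by (intro power_mono) auto
      then have "norm (u - p)^2 \<le> norm (u - (p + t *\<^sub>R n))^2" using up by linarith
      moreover have "u - (p + t *\<^sub>R n) = (u - p) - t *\<^sub>R n" by (simp add: algebra_simps)
      ultimately show ?thesis by simp
    qed
    define c where "c = inner (u - p) n"
    define N where "N = norm n ^2"
    have N0: "0 \<le> N" by (simp add: N_def)
    have key: "2 * t * c \<le> t^2 * N" for t
    proof -
      have "norm ((u - p) - t *\<^sub>R n)^2 = norm (u - p)^2 - 2*t*c + t^2 * N"
        unfolding c_def N_def power2_norm_eq_inner
        by (simp add: inner_diff_left inner_diff_right inner_commute power2_eq_square algebra_simps)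
      then show ?thesis using ge[of t] by linarith
    qed
    have "2 * (c/(N+1)) * c \<le> (c/(N+1))^2 * N" using key .
    then have "2 * (c/(N+1)) * c * (N+1)^2 \<le> (c/(N+1))^2 * N * (N+1)^2"
      by (rule mult_right_mono) simp
    moreover have "2 * (c/(N+1)) * c * (N+1)^2 = 2 * c^2 * (N+1)" using N0
      by (simp add: field_simps power2_eq_square)
    moreover have "(c/(N+1))^2 * N * (N+1)^2 = c^2 * N" using N0
      by (simp add: power_divide)
    ultimately have "2 * c^2 * (N+1) \<le> c^2 * N" by simp
    then have "c^2 * (N + 2) \<le> 0" by (simp add: algebra_simps)
    then have "c^2 \<le> 0" using N0 mult_le_cancel_right_pos[of "N+2" "c^2" 0] by simp
    then show ?thesis by (simp add: c_def)
  qed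
  have "(\<lambda>k. inner (u - p) (s k)) \<longlonglongrightarrow> inner (u - p) p" by (intro tendsto_intros p)
  then have op: "inner (u - p) p = 0" using orth sS by (simp add: LIMSEQ_const_iff)
  have lb: "c \<le> norm (u - p)" if "\<forall>s\<in>S. c \<le> norm (u - s)" for c
  proof -
    have lim: "(\<lambda>k. norm (u - s k)) \<longlonglongrightarrow> norm (u - p)" by (intro tendsto_intros p)
    show ?thesis by (rule LIMSEQ_le_const[OF lim]) (use that sS in blast)
  qed
  show ?thesis using orth op lb by blast
qed


lemma pyth3:
  fixes a b c :: "'a::real_inner"
  assumes "inner a b = 0" "inner a c = 0" "inner b c = 0"
  shows "norm (a + b + c)^2 = norm a^2 + norm b^2 + norm c^2"
  using assms unfolding power2_norm_eq_inner
  by (simp add: inner_add_left inner_add_right inner_commute)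

theorem corollary3p9:
  assumes "infinite_dimensional TYPE('a::complex_hilbert)"
    and "infinite_dimensional TYPE('b::complex_hilbert)"
  shows "{A :: 'a \<Rightarrow>\<^sub>L 'b. clinear_op A \<and> bounded_below A}
           \<subseteq> closure {A. clinear_op A \<and> minimum_attaining A \<and> bounded_below A}"
proof
  fix A :: "'a \<Rightarrow>\<^sub>L 'b" assume "A \<in> {A. clinear_op A \<and> bounded_below A}"
  then have Acl: "clinear_op A" and Abb: "bounded_below A" by auto
  have "cspan ({}::'a set) \<noteq> UNIV" using assms(1) unfolding infinite_dimensional_def by blast
  moreover have "cspan ({}::'a set) = {0}" unfolding cspan_def by auto
  ultimately obtain x :: 'a where x: "x \<noteq> 0" by auto
  define Sa where "Sa = {norm (A y) | y. norm y = 1}"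
  define m where "m = min_modulus A"
  have mSa: "m = Inf Sa" by (simp add: m_def min_modulus_def Sa_def)
  have Sane: "Sa \<noteq> {}" using x unfolding Sa_def
    by (auto intro!: exI[of _ "x /\<^sub>R norm x"])
  obtain c where c: "c > 0" "\<And>y. c * norm y \<le> norm (A y)" using Abb unfolding bounded_below_def by blast
  have mc: "c \<le> m" unfolding mSa
    by (rule cInf_greatest[OF Sane]) (auto simp: Sa_def intro: order_trans[OF _ c(2)])
  have mpos: "m > 0" using c mc by linarith
  have Sabdd: "bdd_below Sa" by (auto simp: Sa_def intro!: bdd_belowI[of _ 0])
  have mlow: "m * norm y \<le> norm (A y)" for y
  proof (cases "y = 0")
    case True then show ?thesis by simp
  next
    case False
    define v where "v = y /\<^sub>R norm y"
    have "norm v = 1" using False by (simp add: v_def)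
    then have "m \<le> norm (A v)" unfolding mSa by (intro cInf_lower Sabdd) (auto simp: Sa_def)
    also have "norm (A v) = norm (A y) / norm y" by (simp add: v_def blinfun.scaleR_right divide_inverse_commute)
    finally show ?thesis using False by (simp add: field_simps)
  qed
  show "A \<in> closure {A. clinear_op A \<and> minimum_attaining A \<and> bounded_below A}"
    unfolding closure_approachable
  proof (intro allI impI)
    fix \<epsilon> :: real assume \<epsilon>: "\<epsilon> > 0"
    define \<eta> where "\<eta> = \<epsilon> / 5"
    have \<eta>: "\<eta> > 0" using \<epsilon> by (simp add: \<eta>_def)
    define \<delta> where "\<delta> = min 1 (min \<eta> (\<eta>^2/(2*m+1)))"
    have \<delta>: "\<delta> > 0" "\<delta> \<le> 1" "\<delta> \<le> \<eta>" "\<delta> \<le> \<eta>^2/(2*m+1)" using \<eta> mpos by (auto simp: \<delta>_def)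
    have "Inf Sa < m + \<delta>" using mSa \<delta> by simp
    then obtain t where "t \<in> Sa" "t < m + \<delta>" using cInf_lessD[OF Sane] by blast
    then obtain x0 where x0: "norm x0 = 1" "norm (A x0) < m + \<delta>" by (auto simp: Sa_def)
    define ix0 where "ix0 = cscale \<i> x0"
    have x0x0: "inner x0 x0 = 1" using x0 by (simp add: power2_norm_eq_inner[symmetric])
    have ix0ix0: "inner ix0 ix0 = 1" using x0x0 by (simp add: ix0_def inner_ii)
    have x0ix0: "inner x0 ix0 = 0" "inner ix0 x0 = 0"
      by (simp_all add: ix0_def inner_ii_self inner_commute[of _ x0])
    define M where "M = {z. inner z x0 = 0 \<and> inner z ix0 = 0}"
    have iM: "cscale \<i> z \<in> M" if "z \<in> M" for z
      using that by (simp add: M_def ix0_def inner_ii_left inner_ii ii_ii)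
    define u where "u = A x0"
    have Au: "A ix0 = cscale \<i> u" using clinear_opD[OF Acl] by (simp add: ix0_def u_def)
    obtain p where porth: "\<forall>n\<in>blinfun_apply A ` M. inner (u - p) n = 0"
      and pp: "inner (u - p) p = 0"
      and plb: "\<forall>c. (\<forall>s\<in>blinfun_apply A ` M. c \<le> norm (u - s)) \<longrightarrow> c \<le> norm (u - p)"
    proof -
      have "0 \<in> blinfun_apply A ` M" by (auto simp: M_def intro!: image_eqI[of _ _ 0])
      moreover have "x + y \<in> blinfun_apply A ` M" if "x \<in> blinfun_apply A ` M" "y \<in> blinfun_apply A ` M" for x y
        using that by (auto simp: M_def inner_add_left blinfun.add_right[symmetric])
      moreover have "r *\<^sub>R x \<in> blinfun_apply A ` M" if "x \<in> blinfun_apply A ` M" for x r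
        using that by (auto simp: M_def blinfun.scaleR_right[symmetric])
      ultimately show ?thesis using proj_exists[of "blinfun_apply A ` M" u] that by blast
    qed
    define e where "e = u - p"
    have eA: "inner e (A z) = 0" if "z \<in> M" for z using porth that by (auto simp: e_def)
    have ep: "inner e p = 0" using pp by (simp add: e_def)
    have ege: "m \<le> norm e" unfolding e_def
    proof (rule plb[rule_format], safe)
      fix z assume z: "z \<in> M"
      have "norm (x0 - z)^2 = 1 + norm z^2" using z x0x0
        by (simp add: M_def power2_norm_eq_inner inner_diff_left inner_diff_right inner_commute)
      then have "1 \<le> norm (x0 - z)^2" by simp
      then have "1 \<le> norm (x0 - z)" using power2_le_imp_le[of 1 "norm (x0 - z)"] by simp
      then have "m \<le> m * norm (x0 - z)" using mpos by simp
      also have "\<dots> \<le> norm (A (x0 - z))" by (rule mlow)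
      finally show "m \<le> norm (u - A z)" by (simp add: u_def blinfun.diff_right)
    qed
    have epos: "norm e > 0" using ege mpos by linarith
    define s where "s = m / norm e"
    have se: "s * norm e = m" using epos by (simp add: s_def)
    have s01: "0 < s" "s \<le> 1" using epos ege mpos by (auto simp: s_def)
    define w where "w = s *\<^sub>R e - u"
    define f where "f = (\<lambda>y. A y + inner y x0 *\<^sub>R w + inner y ix0 *\<^sub>R cscale \<i> w)"
    have blf: "bounded_linear f" unfolding f_def by (intro bounded_linear_intros)
    define B where "B = Blinfun f"
    have Bapp: "blinfun_apply B y = f y" for y by (simp add: B_def bounded_linear_Blinfun_apply[OF blf])
    have ie: "inner e (cscale \<i> e) = 0" "norm (cscale \<i> e) = norm e" by (simp_all add: inner_ii_self norm_ii)
    have ieA: "inner (A z) (cscale \<i> e) = 0" if "z \<in> M" for z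
    proof -
      have "inner (A z) (cscale \<i> e) = - inner (cscale \<i> (A z)) e" by (simp add: inner_ii_left)
      also have "\<dots> = - inner e (A (cscale \<i> z))" using clinear_opD[OF Acl] by (simp add: inner_commute)
      finally show ?thesis using eA[OF iM[OF that]] by simp
    qed
    have Blow: "m * norm y \<le> norm (B y)" for y
    proof -
      define \<alpha> where "\<alpha> = inner y x0"
      define \<beta> where "\<beta> = inner y ix0"
      define z where "z = y - \<alpha> *\<^sub>R x0 - \<beta> *\<^sub>R ix0"
      have zM: "z \<in> M" using x0x0 ix0ix0 x0ix0
        by (simp add: M_def z_def \<alpha>_def \<beta>_def inner_diff_left)
      have yz: "y = z + \<alpha> *\<^sub>R x0 + \<beta> *\<^sub>R ix0" by (simp add: z_def)
      have zM': "inner z x0 = 0" "inner z ix0 = 0" using zM by (auto simp: M_def)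
      have ny: "norm y^2 = norm z^2 + \<alpha>^2 + \<beta>^2"
      proof -
        have "norm y^2 = norm z^2 + norm (\<alpha> *\<^sub>R x0)^2 + norm (\<beta> *\<^sub>R ix0)^2"
          unfolding yz using zM x0ix0 by (intro pyth3) (auto simp: M_def)
        moreover have "norm x0 = 1" "norm ix0 = 1" using x0 by (simp_all add: ix0_def norm_ii)
        ultimately show ?thesis by (simp add: power_mult_distrib)
      qed
      have "u + w = s *\<^sub>R e" by (simp add: w_def)
      have By: "B y = A z + (\<alpha> * s) *\<^sub>R e + (\<beta> * s) *\<^sub>R cscale \<i> e"
      proof -
        have "B y = A z + \<alpha> *\<^sub>R (u + w) + \<beta> *\<^sub>R cscale \<i> (u + w)"
          unfolding Bapp f_def
          by (simp add: yz blinfun.add_right blinfun.scaleR_right Au u_def[symmetric]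
              inner_add_left x0x0 ix0ix0 x0ix0 zM' cscale_add_right algebra_simps flip: \<alpha>_def \<beta>_def)
        also have "\<dots> = A z + (\<alpha> * s) *\<^sub>R e + (\<beta> * s) *\<^sub>R cscale \<i> e"
          by (simp add: w_def cscale_scaleR)
        finally show ?thesis .
      qed
      have "norm (B y)^2 = norm (A z)^2 + norm ((\<alpha> * s) *\<^sub>R e)^2 + norm ((\<beta> * s) *\<^sub>R cscale \<i> e)^2"
        unfolding By using eA[OF zM] ieA[OF zM] ie(1) by (intro pyth3) (auto simp: inner_commute)
      also have "\<dots> = norm (A z)^2 + (\<alpha>^2 + \<beta>^2) * (s * norm e)^2"
        using ie(2) by (simp add: power_mult_distrib algebra_simps)
      also have "\<dots> = norm (A z)^2 + (\<alpha>^2 + \<beta>^2) * m^2" by (simp add: se)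
      also have "\<dots> \<ge> (m * norm z)^2 + (\<alpha>^2 + \<beta>^2) * m^2"
        using mlow[of z] mpos by (intro add_right_mono power_mono) auto
      finally have "(m * norm y)^2 \<le> norm (B y)^2" using ny by (simp add: power_mult_distrib algebra_simps)
      then show ?thesis by (rule power2_le_imp_le) simp
    qed
    have Bx0: "norm (B x0) = m"
    proof -
      have "B x0 = s *\<^sub>R e" unfolding Bapp f_def using x0x0 x0ix0 by (simp add: w_def u_def)
      then show ?thesis using s01 se by simp
    qed
    have mB: "min_modulus B = m" unfolding min_modulus_def
    proof (rule cInf_eq_minimum)
      show "m \<in> {norm (B x) |x. norm x = 1}" using Bx0 x0 by blast
    next
      fix t assume "t \<in> {norm (B x) |x. norm x = 1}"
      then obtain x where "norm x = 1" "t = norm (B x)" by auto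
      then show "m \<le> t" using Blow[of x] by simp
    qed
    have Bcl: "clinear_op B"
    proof (rule clinear_opI)
      fix y
      show "B (cscale \<i> y) = cscale \<i> (B y)"
        unfolding Bapp f_def
        by (simp add: clinear_opD[OF Acl] inner_ii_left inner_ii ix0_def cscale_add_right cscale_scaleR ii_ii algebra_simps)
    qed
    have Bbb: "bounded_below B" unfolding bounded_below_def using mpos Blow by blast
    have Bma: "minimum_attaining B" unfolding minimum_attaining_def mB using x0 Bx0 by blast
    have nu: "norm u^2 = norm e^2 + norm p^2"
    proof -
      have "u = e + p" by (simp add: e_def)
      then show ?thesis using ep unfolding power2_norm_eq_inner
        by (simp add: inner_add_left inner_add_right inner_commute)
    qed
    have nu2: "norm u < m + \<delta>" using x0 by (simp add: u_def)
    have "norm e^2 \<le> norm u^2" using nu by simp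
    then have eu: "norm e \<le> norm u" by (rule power2_le_imp_le) simp
    have "norm p^2 \<le> (m + \<delta>)^2 - m^2"
    proof -
      have "norm u^2 \<le> (m + \<delta>)^2" using nu2 by (intro power_mono) auto
      moreover have "m^2 \<le> norm e^2" using ege mpos by (intro power_mono) auto
      ultimately show ?thesis using nu by linarith
    qed
    also have "(m + \<delta>)^2 - m^2 = \<delta> * (2*m + \<delta>)" by (simp add: power2_eq_square algebra_simps)
    also have "\<dots> \<le> \<delta> * (2*m+1)" using \<delta> by (intro mult_left_mono) auto
    also have "\<dots> \<le> \<eta>^2" using \<delta>(4) mpos by (simp add: field_simps)
    finally have "norm p^2 \<le> \<eta>^2" .
    then have np: "norm p \<le> \<eta>" by (rule power2_le_imp_le) (use \<eta> in simp)
    have "w = (s - 1) *\<^sub>R e - p" by (simp add: w_def e_def algebra_simps)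
    then have "norm w \<le> norm ((s - 1) *\<^sub>R e) + norm p" by (metis norm_triangle_ineq4)
    also have "norm ((s - 1) *\<^sub>R e) = (1 - s) * norm e" using s01 by simp
    also have "\<dots> = norm e - m" using se by (simp add: algebra_simps)
    finally have nw: "norm w < 2 * \<eta>" using eu nu2 np \<delta> by linarith
    have "norm (B - A) \<le> 2 * norm w"
    proof (rule norm_blinfun_bound)
      fix y
      have "blinfun_apply (B - A) y = inner y x0 *\<^sub>R w + inner y ix0 *\<^sub>R cscale \<i> w"
        by (simp add: blinfun.diff_left Bapp f_def)
      also have "norm \<dots> \<le> \<bar>inner y x0\<bar> * norm w + \<bar>inner y ix0\<bar> * norm w"
        by (metis norm_scaleR norm_triangle_ineq norm_ii)
      also have "\<dots> \<le> norm y * norm w + norm y * norm w"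
      proof -
        have "\<bar>inner y x0\<bar> \<le> norm y" using Cauchy_Schwarz_ineq2[of y x0] x0 by simp
        moreover have "\<bar>inner y ix0\<bar> \<le> norm y" using Cauchy_Schwarz_ineq2[of y ix0] x0 by (simp add: ix0_def norm_ii)
        ultimately show ?thesis by (intro add_mono mult_right_mono) auto
      qed
      finally show "norm (blinfun_apply (B - A) y) \<le> 2 * norm w * norm y" by (simp add: mult_ac)
    qed simp
    then have "dist B A < \<epsilon>" using nw \<eta>_def \<epsilon> by (simp add: dist_norm)
    then show "\<exists>B\<in>{A. clinear_op A \<and> minimum_attaining A \<and> bounded_below A}. dist B A < \<epsilon>"
      using Bcl Bma Bbb by blast
  qed
qed

end
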